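(* Let $\Lambda=[\lambda_{\min},\lambda_{\max}]\subset[0,\infty)$ and let $\tilde\nu(\lambda,dx)$ be a probability kernel on $(0,\infty)$ with $s_0>0$ such that $\sup_{\lambda\in\Lambda}\int_0^\infty e^{sx}\tilde\nu(\lambda,dx)<\infty$ for all $s\in[0,s_0)$. Fix $\eta=\delta+iy$ with $\delta\in[0,s_0)$ and $r\ge0$. Let $\{(T_k,X_k)\}$ be a marked point process whose jump measure has compensator $\lambda_s\tilde\nu(\lambda_s,dx)ds$, and suppose $\lambda_s\in\Lambda$ (in particular $\lambda_s\le\lambda_{\max}$) for all $s\in[t,T]$. Define $$F(t,\lambda,\eta):=\mathbb E\Big[e^{-r(T-t)}\prod_{t<T_k\le T}e^{\eta X_k}\ \Big|\ \lambda_t=\lambda\Big].$$ Then $$|F(t,\lambda,\eta)|\le\exp\Big((T-t)\big[\lambda_{\max}(M^*_\eta-1)-r\big]\Big),\qquad M^*_\eta:=\sup_{\lambda\in\Lambda}\int_0^\infty e^{\delta x}\tilde\nu(\lambda,dx).$$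
   Context: $\lambda_s$ is the (predictable) jump intensity of the marked point process; the jumps of the accumulated mark process are the marks $X_k$. *)

theory Defs
  imports "HOL-Probability.Probability"
begin

definition mpp_filtration :: "'a measure \<Rightarrow> (real \<Rightarrow> 'a measure) \<Rightarrow> bool" where
  "mpp_filtration M F \<longleftrightarrow>
     (\<forall>s. space (F s) = space M \<and> sets (F s) \<subseteq> sets M) \<and>
     (\<forall>s u. s \<le> u \<longrightarrow> sets (F s) \<subseteq> sets (F u))"

definition predictable :: "'a measure \<Rightarrow> (real \<Rightarrow> 'a measure) \<Rightarrow> ('a \<times> real) measure" where
  "predictable M F = sigma (space M \<times> {0..})
     ({A \<times> {s<..u} | A s u. 0 \<le> s \<and> s \<le> u \<and> A \<in> sets (F s)} \<union>
      {A \<times> {0} | A. A \<in> sets (F 0)})"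

text \<open>An F-adapted marked point process with jump times Tk (values in (0,inf], strictly
  increasing while finite, infinity meaning no further jump) and marks X in (0,inf).\<close>
definition marked_point_process ::
  "'a measure \<Rightarrow> (real \<Rightarrow> 'a measure) \<Rightarrow> (nat \<Rightarrow> 'a \<Rightarrow> ereal) \<Rightarrow> (nat \<Rightarrow> 'a \<Rightarrow> real) \<Rightarrow> bool" where
  "marked_point_process M F Tk X \<longleftrightarrow>
     (\<forall>k. Tk k \<in> borel_measurable M \<and> X k \<in> borel_measurable M) \<and>
     (\<forall>\<omega>\<in>space M. \<forall>k. 0 < Tk k \<omega> \<and> Tk k \<omega> \<le> Tk (Suc k) \<omega> \<and>
        (Tk k \<omega> < \<infinity> \<longrightarrow> Tk k \<omega> < Tk (Suc k) \<omega> \<and> 0 < X k \<omega>)) \<and>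
     (\<forall>k s B. B \<in> sets borel \<longrightarrow>
        {\<omega>\<in>space M. Tk k \<omega> \<le> ereal s \<and> X k \<omega> \<in> B} \<in> sets (F s))"

text \<open>The jump measure sum_k delta_(T_k,X_k) has F-compensator lam_s nu(lam_s,dx) ds
  (dual predictable projection characterisation).\<close>
definition has_compensator ::
  "'a measure \<Rightarrow> (real \<Rightarrow> 'a measure) \<Rightarrow> (nat \<Rightarrow> 'a \<Rightarrow> ereal) \<Rightarrow> (nat \<Rightarrow> 'a \<Rightarrow> real)
    \<Rightarrow> ('a \<Rightarrow> real \<Rightarrow> real) \<Rightarrow> (real \<Rightarrow> real measure) \<Rightarrow> bool" where
  "has_compensator M F Tk X lam nu \<longleftrightarrow>
     (\<forall>H \<in> borel_measurable (predictable M F \<Otimes>\<^sub>M (borel :: real measure)).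
        (\<integral>\<^sup>+\<omega>. (\<Sum>k. if Tk k \<omega> < \<infinity> then H ((\<omega>, real_of_ereal (Tk k \<omega>)), X k \<omega>) else 0) \<partial>M)
        = (\<integral>\<^sup>+\<omega>. (\<integral>\<^sup>+s\<in>{0..}. ennreal (lam \<omega> s) *
              (\<integral>\<^sup>+x. H ((\<omega>, s), x) \<partial>nu (lam \<omega> s)) \<partial>lborel) \<partial>M))"

definition cond_exp_complex :: "'a measure \<Rightarrow> 'a measure \<Rightarrow> ('a \<Rightarrow> complex) \<Rightarrow> 'a \<Rightarrow> complex" where
  "cond_exp_complex M N f = (\<lambda>\<omega>. Complex (real_cond_exp M N (\<lambda>x. Re (f x)) \<omega>)
                                          (real_cond_exp M N (\<lambda>x. Im (f x)) \<omega>))"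

end

theory Submission
  imports Defs "HOL-Analysis.Equivalence_Lebesgue_Henstock_Integration"
begin

definition Qs :: "(nat \<Rightarrow> ereal) \<Rightarrow> (nat \<Rightarrow> real) \<Rightarrow> real \<Rightarrow> real \<Rightarrow> nat \<Rightarrow> real \<Rightarrow> ennreal" where
  "Qs T Y d t m s = (\<Prod>j<m. if ereal t < T j \<and> T j < ereal s then ennreal (exp (d * Y j)) else 1)"

definition Qp :: "(nat \<Rightarrow> ereal) \<Rightarrow> (nat \<Rightarrow> real) \<Rightarrow> real \<Rightarrow> real \<Rightarrow> nat \<Rightarrow> real \<Rightarrow> ennreal" where
  "Qp T Y d t m s = (\<Prod>j<m. if ereal t < T j \<and> T j \<le> ereal s then ennreal (exp (d * Y j)) else 1)"

locale seqs =
  fixes T :: "nat \<Rightarrow> ereal" and Y :: "nat \<Rightarrow> real" and d t :: real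
  assumes Tmono: "\<And>k. T k \<le> T (Suc k)"
    and Tstrict: "\<And>k. T k < \<infinity> \<Longrightarrow> T k < T (Suc k) \<and> 0 < Y k"
    and Tpos: "\<And>k. 0 < T k"
    and dpos: "0 \<le> d"
begin

lemma T_le: "j \<le> k \<Longrightarrow> T j \<le> T k"
  using Tmono by (rule lift_Suc_mono_le)

lemma T_less: assumes "j < k" "T k < \<infinity>" shows "T j < T k"
proof -
  have "T j \<le> T k" using assms T_le by simp
  hence "T j < \<infinity>" using assms(2) by (rule le_less_trans)
  hence "T j < T (Suc j)" using Tstrict by blast
  also have "\<dots> \<le> T k" using assms T_le by simp
  finally show ?thesis .
qed

lemma fin_real: assumes "T k \<le> ereal u" shows "ereal (real_of_ereal (T k)) = T k"
proof -
  have "0 < T k" by (rule Tpos)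
  thus ?thesis using assms by (cases "T k") auto
qed

lemma exp_ge1: assumes "T k < \<infinity>" shows "1 \<le> exp (d * Y k)"
  using Tstrict[OF assms] dpos by simp

lemma fac_ge1': assumes "T j < \<infinity>" shows "1 \<le> ennreal (exp (d * Y j))"
  using exp_ge1[OF assms] by (simp add: ennreal_ge_1)

lemma fac_ge1: "1 \<le> (if ereal t < T j \<and> T j < ereal s then ennreal (exp (d * Y j)) else 1)"
proof (cases "ereal t < T j \<and> T j < ereal s")
  case True
  hence "T j < \<infinity>" using less_trans[of "T j" "ereal s" \<infinity>] by simp
  thus ?thesis using True fac_ge1' by simp
qed auto

lemma Qs_Suc_mono: "Qs T Y d t m s \<le> Qs T Y d t (Suc m) s"
proof -
  have "Qs T Y d t m s = Qs T Y d t m s * 1" by simp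
  also have "\<dots> \<le> Qs T Y d t m s * (if ereal t < T m \<and> T m < ereal s then ennreal (exp (d * Y m)) else 1)"
    by (rule mult_left_mono[OF fac_ge1]) simp
  also have "\<dots> = Qs T Y d t (Suc m) s" unfolding Qs_def by simp
  finally show ?thesis .
qed

lemma Qs_mono: "k \<le> m \<Longrightarrow> Qs T Y d t k s \<le> Qs T Y d t m s"
  using Qs_Suc_mono by (rule lift_Suc_mono_le)

lemma prod_mono_enn:
  fixes f g :: "nat \<Rightarrow> ennreal"
  shows "(\<And>j. j < m \<Longrightarrow> f j \<le> g j) \<Longrightarrow> (\<Prod>j<m. f j) \<le> (\<Prod>j<m. g j)"
proof (induction m)
  case (Suc m) thus ?case by (simp add: mult_mono')
qed auto

lemma Qp_le_Qs: assumes "q < s" shows "Qp T Y d t m q \<le> Qs T Y d t m s"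
  unfolding Qp_def Qs_def
proof (rule prod_mono_enn)
  fix j
  show "(if ereal t < T j \<and> T j \<le> ereal q then ennreal (exp (d * Y j)) else 1)
     \<le> (if ereal t < T j \<and> T j < ereal s then ennreal (exp (d * Y j)) else 1)"
  proof (cases "ereal t < T j \<and> T j \<le> ereal q")
    case True
    have "ereal q < ereal s" using assms by simp
    hence "T j < ereal s" using True by (meson order.strict_trans1)
    thus ?thesis using True by simp
  next
    case False thus ?thesis using fac_ge1[of j s] by (simp only: if_False if_P[OF refl])
  qed
qed

lemma Qs_le_Qp: "Qs T Y d t m s \<le> Qp T Y d t m s"
  unfolding Qp_def Qs_def
proof (rule prod_mono_enn)
  fix j
  show "(if ereal t < T j \<and> T j < ereal s then ennreal (exp (d * Y j)) else 1)
     \<le> (if ereal t < T j \<and> T j \<le> ereal s then ennreal (exp (d * Y j)) else 1)"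
  proof (cases "ereal t < T j \<and> T j \<le> ereal s")
    case True
    hence "T j < \<infinity>" using le_less_trans[of "T j" "ereal s" \<infinity>] by simp
    thus ?thesis using True fac_ge1' by auto
  qed auto
qed

lemma Qp_Suc: "Qp T Y d t (Suc m) u = Qp T Y d t m u +
   (if ereal t < T m \<and> T m \<le> ereal u then ennreal (exp (d * Y m) - 1) * Qs T Y d t m (real_of_ereal (T m)) else 0)"
proof (cases "ereal t < T m \<and> T m \<le> ereal u")
  case True
  have fin: "T m < \<infinity>" using True by (auto intro: le_less_trans)
  have eq: "Qp T Y d t m u = Qs T Y d t m (real_of_ereal (T m))"
    unfolding Qp_def Qs_def fin_real[of m u, OF True[THEN conjunct2]]
  proof (rule prod.cong[OF refl])
    fix j assume "j \<in> {..<m}"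
    hence "T j < T m" using T_less fin by simp
    thus "(if ereal t < T j \<and> T j \<le> ereal u then ennreal (exp (d * Y j)) else 1) =
          (if ereal t < T j \<and> T j < T m then ennreal (exp (d * Y j)) else 1)"
      using True by auto
  qed
  have e: "ennreal (exp (d * Y m)) = 1 + ennreal (exp (d * Y m) - 1)"
    using exp_ge1[OF fin] by (subst ennreal_1[symmetric], subst ennreal_plus[symmetric]) auto
  have "Qp T Y d t (Suc m) u = Qp T Y d t m u * ennreal (exp (d * Y m))"
    using True by (simp add: Qp_def)
  also have "\<dots> = Qp T Y d t m u * (1 + ennreal (exp (d * Y m) - 1))"
    by (subst e) (rule refl)
  also have "\<dots> = Qp T Y d t m u + ennreal (exp (d * Y m) - 1) * Qs T Y d t m (real_of_ereal (T m))"
    by (simp only: distrib_left mult_1_right mult.commute[of "Qp T Y d t m u"] eq[symmetric])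
  finally show ?thesis using True by simp
next
  case False
  show ?thesis unfolding Qp_def
    by (simp only: prod.lessThan_Suc if_not_P[OF False] mult_1_right add_0_right)
qed

lemma Qp_sum: "Qp T Y d t m u = 1 + (\<Sum>k<m.
   (if ereal t < T k \<and> T k \<le> ereal u then ennreal (exp (d * Y k) - 1) * Qs T Y d t k (real_of_ereal (T k)) else 0))"
proof (induction m)
  case 0 thus ?case by (simp add: Qp_def)
next
  case (Suc m) thus ?case by (simp add: Qp_Suc add.assoc)
qed

lemma Qp_sum_le: "Qp T Y d t (Suc m) u \<le> 1 + (\<Sum>k<Suc m.
   (if ereal t < T k \<and> T k \<le> ereal u then ennreal (exp (d * Y k) - 1) * Qs T Y d t m (real_of_ereal (T k)) else 0))"
  unfolding Qp_sum
  by (intro add_mono order.refl sum_mono) (auto intro!: mult_left_mono Qs_mono)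

lemma exists_q:
  assumes "t < s"
  shows "\<exists>q\<in>\<rat>. t \<le> q \<and> q < s \<and> Qp T Y d t m q = Qs T Y d t m s"
proof -
  define B where "B = insert t (real_of_ereal ` (T ` {j. j < m \<and> ereal t < T j \<and> T j < ereal s}))"
  have finB: "finite B" unfolding B_def by simp
  have Bs: "\<forall>b\<in>B. b < s"
  proof
    fix b assume "b \<in> B"
    then consider "b = t" | j where "j < m" "ereal t < T j" "T j < ereal s" "b = real_of_ereal (T j)"
      unfolding B_def by auto
    thus "b < s"
    proof cases
      case 1 thus ?thesis using assms by simp
    next
      case 2
      hence "ereal b < ereal s" using fin_real[of j s] by simp
      thus ?thesis by simp
    qed
  qed
  have "Max B < s" using finB Bs by (simp add: B_def)
  then obtain q where q: "q \<in> \<rat>" "Max B < q" "q < s" using Rats_dense_in_real by blast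
  have tB: "t \<le> Max B" using finB by (simp add: B_def)
  have jB: "T j \<le> ereal q" if "j < m" "ereal t < T j" "T j < ereal s" for j
  proof -
    have "real_of_ereal (T j) \<in> B" unfolding B_def using that by blast
    hence "real_of_ereal (T j) \<le> Max B" using finB by simp
    hence "real_of_ereal (T j) \<le> q" using q by simp
    thus ?thesis using fin_real[of j s] that by (metis ereal_less_eq(3) less_imp_le)
  qed
  have "Qp T Y d t m q = Qs T Y d t m s"
    unfolding Qp_def Qs_def
  proof (rule prod.cong[OF refl])
    fix j assume "j \<in> {..<m}"
    thus "(if ereal t < T j \<and> T j \<le> ereal q then ennreal (exp (d * Y j)) else 1) =
          (if ereal t < T j \<and> T j < ereal s then ennreal (exp (d * Y j)) else 1)"
    proof -
      have "ereal q < ereal s" using q(3) by simp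
      hence "T j \<le> ereal q \<Longrightarrow> T j < ereal s" by (meson order.strict_trans1)
      thus ?thesis using jB[of j] \<open>j \<in> {..<m}\<close> by auto
    qed
  qed
  moreover have "t \<le> q" using q tB by simp
  ultimately show ?thesis using q by blast
qed

lemma Qp_exp:
  assumes "finite {k. ereal t < T k \<and> T k \<le> ereal u}"
  shows "ennreal (exp (d * (\<Sum>k\<in>{k. ereal t < T k \<and> T k \<le> ereal u}. Y k))) \<le> (SUP m. Qp T Y d t m u)"
proof -
  let ?W = "{k. ereal t < T k \<and> T k \<le> ereal u}"
  obtain m where m: "?W \<subseteq> {..<m}" using assms finite_nat_iff_bounded by blast
  have "Qp T Y d t m u = (\<Prod>j\<in>{..<m} \<inter> ?W. ennreal (exp (d * Y j)))"
    unfolding Qp_def by (subst prod.inter_restrict) (auto intro!: prod.cong)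
  also have "{..<m} \<inter> ?W = ?W" using m by blast
  also have "(\<Prod>j\<in>?W. ennreal (exp (d * Y j))) = ennreal (\<Prod>j\<in>?W. exp (d * Y j))"
    by (rule prod_ennreal) simp
  also have "(\<Prod>j\<in>?W. exp (d * Y j)) = exp (d * (\<Sum>k\<in>?W. Y k))"
    by (simp add: exp_sum assms sum_distrib_left)
  finally show ?thesis by (metis SUP_upper UNIV_I)
qed

end

locale ctx =
  fixes M :: "'a measure" and F :: "real \<Rightarrow> 'a measure"
    and Tk :: "nat \<Rightarrow> 'a \<Rightarrow> ereal" and X :: "nat \<Rightarrow> 'a \<Rightarrow> real"
    and lam :: "'a \<Rightarrow> real \<Rightarrow> real"
  assumes filt: "mpp_filtration M F"
    and mpp: "marked_point_process M F Tk X"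
    and lam_pred: "(\<lambda>(\<omega>, s). lam \<omega> s) \<in> borel_measurable (predictable M F)"
begin

lemma F_space: "space (F s) = space M"
  using filt unfolding mpp_filtration_def by blast

lemma F_sets: "sets (F s) \<subseteq> sets M"
  using filt unfolding mpp_filtration_def by blast

lemma F_mono: "s \<le> u \<Longrightarrow> sets (F s) \<subseteq> sets (F u)"
  using filt unfolding mpp_filtration_def by blast

lemma Tk_meas[measurable]: "Tk k \<in> borel_measurable M" and X_meas[measurable]: "X k \<in> borel_measurable M"
  using mpp unfolding marked_point_process_def by auto

lemma mpp_F: "B \<in> sets borel \<Longrightarrow> {\<omega>\<in>space M. Tk k \<omega> \<le> ereal s \<and> X k \<omega> \<in> B} \<in> sets (F s)"
  using mpp unfolding marked_point_process_def by auto

lemma seqs_at: "\<omega> \<in> space M \<Longrightarrow> 0 \<le> d \<Longrightarrow> seqs (\<lambda>j. Tk j \<omega>) (\<lambda>j. X j \<omega>) d"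
  using mpp unfolding marked_point_process_def seqs_def by auto

definition "Gen = ({A \<times> {s<..u} | A s u. 0 \<le> s \<and> s \<le> u \<and> A \<in> sets (F s)} \<union>
      {A \<times> {0} | A. A \<in> sets (F 0)})"

lemma Gen_Pow: "Gen \<subseteq> Pow (space M \<times> {0..})"
proof -
  have "A \<subseteq> space M" if "A \<in> sets (F s)" for A s
    using sets.sets_into_space[OF that] F_space by simp
  thus ?thesis unfolding Gen_def by fastforce
qed

lemma pred_eq: "predictable M F = sigma (space M \<times> {0..}) Gen"
  unfolding predictable_def Gen_def ..

lemma space_pred[simp]: "space (predictable M F) = space M \<times> {0..}"
  unfolding pred_eq using Gen_Pow by (simp add: space_measure_of)

lemma sets_pred: "sets (predictable M F) = sigma_sets (space M \<times> {0..}) Gen"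
  unfolding pred_eq using Gen_Pow by (simp add: sets_measure_of)

lemma gen_in_pred: "0 \<le> s \<Longrightarrow> s \<le> u \<Longrightarrow> A \<in> sets (F s) \<Longrightarrow> A \<times> {s<..u} \<in> sets (predictable M F)"
  unfolding sets_pred by (rule sigma_sets.Basic) (auto simp: Gen_def)

lemma section_F:
  assumes "0 \<le> t" "P \<in> sets (predictable M F)"
  shows "{\<omega>\<in>space M. (\<omega>, t) \<in> P} \<in> sets (F t)"
  using assms(2) unfolding sets_pred
proof (induction rule: sigma_sets.induct)
  case (Basic a)
  then consider A s u where "a = A \<times> {s<..u}" "0 \<le> s" "s \<le> u" "A \<in> sets (F s)"
    | A where "a = A \<times> {0}" "A \<in> sets (F 0)" unfolding Gen_def by blast
  thus ?case
  proof cases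
    case 1
    have Asub: "A \<subseteq> space M" using sets.sets_into_space[OF 1(4)] F_space by simp
    show ?thesis
    proof (cases "s < t \<and> t \<le> u")
      case True
      hence "{\<omega>\<in>space M. (\<omega>, t) \<in> a} = A" using 1 Asub by auto
      thus ?thesis using 1 True F_mono[of s t] by auto
    next
      case False
      hence "{\<omega>\<in>space M. (\<omega>, t) \<in> a} = {}" using 1 by auto
      thus ?thesis by (metis sets.empty_sets)
    qed
  next
    case 2
    have Asub: "A \<subseteq> space M" using sets.sets_into_space[OF 2(2)] F_space by simp
    show ?thesis
    proof (cases "t = 0")
      case True
      hence "{\<omega>\<in>space M. (\<omega>, t) \<in> a} = A" using 2 Asub by auto
      thus ?thesis using 2 True by auto
    next
      case False
      hence "{\<omega>\<in>space M. (\<omega>, t) \<in> a} = {}" using 2 by auto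
      thus ?thesis by (metis sets.empty_sets)
    qed
  qed
next
  case Empty thus ?case by simp
next
  case (Compl a)
  have "{\<omega>\<in>space M. (\<omega>, t) \<in> space M \<times> {0..} - a} = space (F t) - {\<omega>\<in>space M. (\<omega>, t) \<in> a}"
    using assms(1) F_space by auto
  thus ?case using Compl by auto
next
  case (Union a)
  have "{\<omega>\<in>space M. (\<omega>, t) \<in> (\<Union>i. a i)} = (\<Union>i. {\<omega>\<in>space M. (\<omega>, t) \<in> a i})" by auto
  thus ?case using Union by auto
qed

lemma lam_F: assumes "0 \<le> t" shows "(\<lambda>\<omega>. lam \<omega> t) \<in> borel_measurable (F t)"
proof (rule measurableI)
  fix B :: "real set" assume B: "B \<in> sets borel"
  let ?P = "(\<lambda>(\<omega>, s). lam \<omega> s) -` B \<inter> space (predictable M F)"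
  have "?P \<in> sets (predictable M F)" using measurable_sets[OF lam_pred B] .
  from section_F[OF assms this]
  have "{\<omega>\<in>space M. (\<omega>, t) \<in> ?P} \<in> sets (F t)" .
  moreover have "{\<omega>\<in>space M. (\<omega>, t) \<in> ?P} = (\<lambda>\<omega>. lam \<omega> t) -` B \<inter> space (F t)"
    using assms F_space by auto
  ultimately show "(\<lambda>\<omega>. lam \<omega> t) -` B \<inter> space (F t) \<in> sets (F t)" by simp
qed simp

lemma fac_F:
  assumes "t \<le> q"
  shows "(\<lambda>\<omega>. if ereal t < Tk j \<omega> \<and> Tk j \<omega> \<le> ereal q then ennreal (exp (d * X j \<omega>)) else 1)
     \<in> borel_measurable (F q)"
proof (rule measurableI)
  fix B :: "ennreal set" assume B: "B \<in> sets borel"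
  let ?phi = "\<lambda>x::real. ennreal (exp (d * x))"
  have phiB: "?phi -` B \<in> sets borel"
    using measurable_sets[of ?phi borel borel B] B by simp
  define E1 where "E1 = {\<omega>\<in>space M. Tk j \<omega> \<le> ereal q \<and> X j \<omega> \<in> ?phi -` B}"
  define E2 where "E2 = {\<omega>\<in>space M. Tk j \<omega> \<le> ereal t \<and> X j \<omega> \<in> UNIV}"
  define E3 where "E3 = {\<omega>\<in>space M. Tk j \<omega> \<le> ereal q \<and> X j \<omega> \<in> UNIV}"
  have E1: "E1 \<in> sets (F q)" unfolding E1_def by (rule mpp_F[OF phiB])
  have E3: "E3 \<in> sets (F q)" unfolding E3_def by (rule mpp_F) simp
  have E2: "E2 \<in> sets (F q)" using mpp_F[of UNIV j t] F_mono[OF assms] unfolding E2_def by auto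
  have eq: "(\<lambda>\<omega>. if ereal t < Tk j \<omega> \<and> Tk j \<omega> \<le> ereal q then ennreal (exp (d * X j \<omega>)) else 1) -` B \<inter> space (F q)
     = (E1 - E2) \<union> (if 1 \<in> B then space (F q) - (E3 - E2) else {})"
    unfolding E1_def E2_def E3_def F_space by (auto simp: not_le split: if_splits)
  show "(\<lambda>\<omega>. if ereal t < Tk j \<omega> \<and> Tk j \<omega> \<le> ereal q then ennreal (exp (d * X j \<omega>)) else 1) -` B \<inter> space (F q) \<in> sets (F q)"
    unfolding eq using E1 E2 E3 by auto
qed simp

lemma Qp_F:
  assumes "t \<le> q"
  shows "(\<lambda>\<omega>. Qp (\<lambda>j. Tk j \<omega>) (\<lambda>j. X j \<omega>) d t m q) \<in> borel_measurable (F q)"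
  unfolding Qp_def
  by (rule borel_measurable_prod_ennreal) (rule fac_F[OF assms])

lemma Qp_M[measurable]: "(\<lambda>\<omega>. Qp (\<lambda>j. Tk j \<omega>) (\<lambda>j. X j \<omega>) d t m q) \<in> borel_measurable M"
  unfolding Qp_def by measurable

lemma Qs_M2[measurable]: "(\<lambda>x. Qs (\<lambda>j. Tk j (fst x)) (\<lambda>j. X j (fst x)) d t m (snd x)) \<in> borel_measurable (M \<Otimes>\<^sub>M lborel)"
  unfolding Qs_def by measurable

end

context ctx begin

lemma Phi_pred:
  assumes t0: "0 \<le> t" and d0: "0 \<le> d" and A: "A \<in> sets (F t)"
  shows "(\<lambda>(\<omega>,s). indicator A \<omega> * indicator {t<..u} s * Qs (\<lambda>j. Tk j \<omega>) (\<lambda>j. X j \<omega>) d t m s)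
     \<in> borel_measurable (predictable M F)"
proof -
  define \<psi> where "\<psi> q \<omega> = indicator A \<omega> * Qp (\<lambda>j. Tk j \<omega>) (\<lambda>j. X j \<omega>) d t m q" for q \<omega>
  have psiF: "\<psi> q \<in> borel_measurable (F q)" if "t \<le> q" for q
  proof -
    have "A \<in> sets (F q)" using A F_mono[OF that] by auto
    hence [measurable]: "indicator A \<in> borel_measurable (F q)" by simp
    have [measurable]: "(\<lambda>\<omega>. Qp (\<lambda>j. Tk j \<omega>) (\<lambda>j. X j \<omega>) d t m q) \<in> borel_measurable (F q)"
      by (rule Qp_F[OF that])
    show ?thesis unfolding \<psi>_def[abs_def] by measurable
  qed
  have trm: "(\<lambda>x. \<psi> q (fst x) * indicator {q<..u} (snd x)) \<in> borel_measurable (predictable M F)"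
    if q: "q \<in> \<rat> \<inter> {t..u}" for q
  proof (rule borel_measurableI_greater)
    fix y :: ennreal
    have [measurable]: "\<psi> q \<in> borel_measurable (F q)" using psiF q by auto
    have S: "{\<omega>\<in>space (F q). y < \<psi> q \<omega>} \<in> sets (F q)" by measurable
    have eq: "{x \<in> space (predictable M F). y < \<psi> q (fst x) * indicator {q<..u} (snd x)}
        = {\<omega>\<in>space M. y < \<psi> q \<omega>} \<times> {q<..u}"
      using q t0 by (auto simp: indicator_def)
    show "{x \<in> space (predictable M F). y < \<psi> q (fst x) * indicator {q<..u} (snd x)} \<in> sets (predictable M F)"
      unfolding eq using gen_in_pred[of q u "{\<omega>\<in>space M. y < \<psi> q \<omega>}"] S q t0 F_space by auto
  qed
  have sup: "(\<lambda>x. SUP q\<in>\<rat> \<inter> {t..u}. \<psi> q (fst x) * indicator {q<..u} (snd x)) \<in> borel_measurable (predictable M F)"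
    by (rule borel_measurable_SUP) (auto intro: trm countable_rat)
  show ?thesis
  proof (rule measurable_cong[THEN iffD1, OF _ sup])
    fix x assume x: "x \<in> space (predictable M F)"
    obtain \<omega> s where xs: "x = (\<omega>, s)" by (cases x)
    have \<omega>: "\<omega> \<in> space M" using x xs by simp
    interpret seqs "\<lambda>j. Tk j \<omega>" "\<lambda>j. X j \<omega>" d by (rule seqs_at[OF \<omega> d0])
    let ?Phi = "indicator A \<omega> * indicator {t<..u} s * Qs (\<lambda>j. Tk j \<omega>) (\<lambda>j. X j \<omega>) d t m s"
    have le1: "(SUP q\<in>\<rat> \<inter> {t..u}. \<psi> q \<omega> * indicator {q<..u} s) \<le> ?Phi"
    proof (rule SUP_least)
      fix q assume q: "q \<in> \<rat> \<inter> {t..u}"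
      show "\<psi> q \<omega> * indicator {q<..u} s \<le> ?Phi"
      proof (cases "s \<in> {q<..u}")
        case True
        hence st: "s \<in> {t<..u}" using q by auto
        have "Qp (\<lambda>j. Tk j \<omega>) (\<lambda>j. X j \<omega>) d t m q \<le> Qs (\<lambda>j. Tk j \<omega>) (\<lambda>j. X j \<omega>) d t m s"
          using True by (intro Qp_le_Qs) simp
        thus ?thesis using True st unfolding \<psi>_def by (auto intro: mult_left_mono)
      qed simp
    qed
    have le2: "?Phi \<le> (SUP q\<in>\<rat> \<inter> {t..u}. \<psi> q \<omega> * indicator {q<..u} s)"
    proof (cases "s \<in> {t<..u}")
      case True
      then obtain q where q: "q \<in> \<rat>" "t \<le> q" "q < s"
        "Qp (\<lambda>j. Tk j \<omega>) (\<lambda>j. X j \<omega>) d t m q = Qs (\<lambda>j. Tk j \<omega>) (\<lambda>j. X j \<omega>) d t m s"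
        using exists_q[of s m] by auto
      have qI: "q \<in> \<rat> \<inter> {t..u}" using q True by auto
      have "?Phi = \<psi> q \<omega> * indicator {q<..u} s" using q True unfolding \<psi>_def by auto
      also have "\<dots> \<le> (SUP q\<in>\<rat> \<inter> {t..u}. \<psi> q \<omega> * indicator {q<..u} s)"
        by (rule SUP_upper[OF qI])
      finally show ?thesis .
    qed simp
    show "(SUP q\<in>\<rat> \<inter> {t..u}. \<psi> q (fst x) * indicator {q<..u} (snd x)) =
        (case x of (\<omega>, s) \<Rightarrow> indicator A \<omega> * indicator {t<..u} s * Qs (\<lambda>j. Tk j \<omega>) (\<lambda>j. X j \<omega>) d t m s)"
      using le1 le2 xs by (simp add: antisym)
  qed
qed

end

locale ctx2 = ctx +
  fixes nu :: "real \<Rightarrow> real measure" and lmin lmax d t Tend :: real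
  assumes prob: "prob_space M"
   and nu_kernel: "nu \<in> borel \<rightarrow>\<^sub>M subprob_algebra borel"
   and nu_prob: "\<And>l. 0 \<le> l \<Longrightarrow> prob_space (nu l)"
   and nu_supp: "\<And>l. 0 \<le> l \<Longrightarrow> emeasure (nu l) {..0} = 0"
   and lmin0: "0 \<le> lmin" and lminmax: "lmin \<le> lmax"
   and Mfin: "(SUP l\<in>{lmin..lmax}. \<integral>\<^sup>+x. ennreal (exp (d * x)) \<partial>nu l) < \<infinity>"
   and d0: "0 \<le> d" and t0: "0 \<le> t" and tT: "t \<le> Tend"
   and lam_nonneg: "\<And>\<omega> s. 0 \<le> lam \<omega> s"
   and comp: "has_compensator M F Tk X lam nu"
   and lam_bdd: "\<forall>\<omega>\<in>space M. \<forall>s\<in>{t..Tend}. lam \<omega> s \<in> {lmin..lmax}"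
begin

definition "Mst = (SUP l\<in>{lmin..lmax}. \<integral>\<^sup>+x. ennreal (exp (d * x)) \<partial>nu l)"
definition "ms = enn2real Mst"
definition "c = lmax * (ms - 1)"

lemma nu_sets: "sets (nu l) = sets borel"
proof -
  have "nu l \<in> space (subprob_algebra borel)" using measurable_space[OF nu_kernel] by simp
  thus ?thesis by (simp add: space_subprob_algebra)
qed

lemma nu_meas: "f \<in> borel_measurable borel \<Longrightarrow> f \<in> borel_measurable (nu l)"
  using measurable_cong_sets[OF nu_sets refl] by blast

lemma nu_AE: assumes "0 \<le> l" shows "AE x in nu l. 0 < x"
proof (rule AE_I')
  show "{..0} \<in> null_sets (nu l)" using nu_supp[OF assms] nu_sets by (auto simp: null_sets_def)
qed auto

lemma nu_int: assumes l: "0 \<le> l"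
  shows "(\<integral>\<^sup>+x. ennreal (exp (d * x) - 1) \<partial>nu l) + 1 = (\<integral>\<^sup>+x. ennreal (exp (d * x)) \<partial>nu l)"
proof -
  interpret p: prob_space "nu l" using nu_prob[OF l] .
  have [measurable]: "(\<lambda>x. ennreal (exp (d * x) - 1)) \<in> borel_measurable (nu l)"
    by (rule nu_meas) simp
  have "(\<integral>\<^sup>+x. ennreal (exp (d * x) - 1) \<partial>nu l) + 1 =
      (\<integral>\<^sup>+x. ennreal (exp (d * x) - 1) \<partial>nu l) + (\<integral>\<^sup>+x. 1 \<partial>nu l)"
    by (simp add: p.emeasure_space_1)
  also have "\<dots> = (\<integral>\<^sup>+x. ennreal (exp (d * x) - 1) + 1 \<partial>nu l)"
    by (rule nn_integral_add[symmetric]) auto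
  also have "\<dots> = (\<integral>\<^sup>+x. ennreal (exp (d * x)) \<partial>nu l)"
  proof (rule nn_integral_cong_AE)
    show "AE x in nu l. ennreal (exp (d * x) - 1) + 1 = ennreal (exp (d * x))"
      using nu_AE[OF l]
    proof eventually_elim
      case (elim x)
      hence "1 \<le> exp (d * x)" using d0 by simp
      thus ?case by (subst ennreal_1[symmetric], subst ennreal_plus[symmetric]) auto
    qed
  qed
  finally show ?thesis .
qed

lemma Mst_ge: "l \<in> {lmin..lmax} \<Longrightarrow> (\<integral>\<^sup>+x. ennreal (exp (d * x)) \<partial>nu l) \<le> Mst"
  unfolding Mst_def by (rule SUP_upper)

lemma ms: "Mst = ennreal ms" "1 \<le> ms"
proof -
  have "Mst < \<infinity>" using Mfin unfolding Mst_def .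
  thus M: "Mst = ennreal ms" unfolding ms_def by (cases Mst) auto
  have "1 \<le> (\<integral>\<^sup>+x. ennreal (exp (d * x)) \<partial>nu lmin)"
    using nu_int[OF lmin0] by (metis add.commute le_iff_add)
  also have "\<dots> \<le> Mst" using Mst_ge lminmax by simp
  finally show "1 \<le> ms" unfolding M by (simp add: ennreal_ge_1)
qed

lemma c0: "0 \<le> c"
  unfolding c_def using ms(2) lmin0 lminmax by simp

lemma nu_bound: assumes l: "l \<in> {lmin..lmax}"
  shows "ennreal l * (\<integral>\<^sup>+x. ennreal (exp (d * x) - 1) \<partial>nu l) \<le> ennreal c"
proof -
  let ?a = "\<integral>\<^sup>+x. ennreal (exp (d * x) - 1) \<partial>nu l"
  have l0: "0 \<le> l" using l lmin0 by simp
  have "?a + 1 \<le> ennreal ms" using nu_int[OF l0] Mst_ge[OF l] ms(1) by simp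
  hence "(?a + 1) - 1 \<le> ennreal ms - 1" by (rule ennreal_minus_mono) simp
  moreover have "ennreal ms - 1 = ennreal (ms - 1)" using ennreal_minus[of 1 ms] by simp
  ultimately have a: "?a \<le> ennreal (ms - 1)" by simp
  have "ennreal l * ?a \<le> ennreal lmax * ennreal (ms - 1)"
    using l by (intro mult_mono a) (auto intro: ennreal_leI)
  also have "\<dots> = ennreal c" unfolding c_def using lmin0 lminmax ms(2)
    by (simp add: ennreal_mult)
  finally show ?thesis .
qed

end

context ctx2 begin

definition "QP m u \<omega> = Qp (\<lambda>j. Tk j \<omega>) (\<lambda>j. X j \<omega>) d t m u"
definition "QS m s \<omega> = Qs (\<lambda>j. Tk j \<omega>) (\<lambda>j. X j \<omega>) d t m s"

lemma QP_meas[measurable]: "QP m u \<in> borel_measurable M"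
  unfolding QP_def[abs_def] Qp_def by measurable

lemma QS_meas[measurable]: "f \<in> borel_measurable M \<Longrightarrow> (\<lambda>\<omega>. QS m (f \<omega>) \<omega>) \<in> borel_measurable M"
  unfolding QS_def Qs_def by measurable

lemma QS_meas2: "(\<lambda>(\<omega>, s). QS m s \<omega>) \<in> borel_measurable (M \<Otimes>\<^sub>M lborel)"
  using Qs_M2[of d t m] unfolding QS_def by (simp add: case_prod_beta')

lemma FTC: assumes "t \<le> u"
  shows "(\<integral>\<^sup>+s. ennreal (c * exp (c * (s - t))) * indicator {t..u} s \<partial>lborel) = ennreal (exp (c * (u - t)) - 1)"
proof -
  have "(\<integral>\<^sup>+s. ennreal (c * exp (c * (s - t))) * indicator {t..u} s \<partial>lborel)
      = ennreal ((\<lambda>s. exp (c * (s - t))) u - (\<lambda>s. exp (c * (s - t))) t)"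
  proof (rule nn_integral_FTC_Icc)
    show "(\<lambda>s. c * exp (c * (s - t))) \<in> borel_measurable borel" by measurable
    fix x :: real
    show "((\<lambda>s. exp (c * (s - t))) has_real_derivative c * exp (c * (x - t))) (at x)"
      by (auto intro!: derivative_eq_intros)
    show "0 \<le> c * exp (c * (x - t))" using c0 by simp
  qed (rule assms)
  thus ?thesis by simp
qed

lemma main_ind:
  assumes A: "A \<in> sets (F t)"
  shows "t \<le> u \<Longrightarrow> u \<le> Tend \<Longrightarrow>
    (\<integral>\<^sup>+\<omega>. indicator A \<omega> * QP m u \<omega> \<partial>M) \<le> emeasure M A * ennreal (exp (c * (u - t)))"
proof (induction m arbitrary: u)
  have AM[measurable]: "A \<in> sets M" using A F_sets by auto
  case 0
  have "(\<integral>\<^sup>+\<omega>. indicator A \<omega> * QP 0 u \<omega> \<partial>M) = emeasure M A"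
    by (simp add: QP_def Qp_def)
  also have "\<dots> \<le> emeasure M A * ennreal (exp (c * (u - t)))"
  proof -
    have "1 \<le> ennreal (exp (c * (u - t)))" using c0 0 by (simp add: ennreal_ge_1)
    thus ?thesis by (metis mult.right_neutral mult_left_mono zero_le)
  qed
  finally show ?case .
next
  case (Suc m)
  have AM[measurable]: "A \<in> sets M" using A F_sets by auto
  define Phi where "Phi \<omega> s = indicator A \<omega> * indicator {t<..u} s * QS m s \<omega>" for \<omega> s
  define H where "H = (\<lambda>((\<omega>::'a, s::real), x::real). Phi \<omega> s * ennreal (exp (d * x) - 1))"
  define Sg where "Sg \<omega> = (\<Sum>k. if Tk k \<omega> < \<infinity> then H ((\<omega>, real_of_ereal (Tk k \<omega>)), X k \<omega>) else 0)" for \<omega>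
  have Phi_pred: "(\<lambda>(\<omega>, s). Phi \<omega> s) \<in> borel_measurable (predictable M F)"
    using Phi_pred[OF t0 d0 A, of u m] unfolding Phi_def QS_def .
  have H_meas: "H \<in> borel_measurable (predictable M F \<Otimes>\<^sub>M borel)"
  proof -
    have "(\<lambda>z. (\<lambda>(\<omega>, s). Phi \<omega> s) (fst z) * ennreal (exp (d * snd z) - 1)) \<in> borel_measurable (predictable M F \<Otimes>\<^sub>M borel)"
      using Phi_pred by measurable
    moreover have "H = (\<lambda>z. (\<lambda>(\<omega>, s). Phi \<omega> s) (fst z) * ennreal (exp (d * snd z) - 1))"
      unfolding H_def by (auto simp: fun_eq_iff)
    ultimately show ?thesis by simp
  qed
  have Phi_M2: "(\<lambda>(\<omega>, s). ennreal c * Phi \<omega> s) \<in> borel_measurable (M \<Otimes>\<^sub>M lborel)"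
  proof -
    have [measurable]: "(\<lambda>(\<omega>, s). QS m s \<omega>) \<in> borel_measurable (M \<Otimes>\<^sub>M lborel)" by (rule QS_meas2)
    show ?thesis unfolding Phi_def by measurable
  qed
  have Sg_eq: "Sg = (\<lambda>\<omega>. \<Sum>k. if Tk k \<omega> < \<infinity> then indicator A \<omega> * indicator {t<..u} (real_of_ereal (Tk k \<omega>))
      * QS m (real_of_ereal (Tk k \<omega>)) \<omega> * ennreal (exp (d * X k \<omega>) - 1) else 0)"
    unfolding Sg_def H_def Phi_def by (simp add: fun_eq_iff cong: if_cong)
  have Sg_meas[measurable]: "Sg \<in> borel_measurable M"
    unfolding Sg_eq by measurable
  have s1: "indicator A \<omega> * QP (Suc m) u \<omega> \<le> indicator A \<omega> + Sg \<omega>" if \<omega>: "\<omega> \<in> space M" for \<omega>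
  proof -
    interpret seqs "\<lambda>j. Tk j \<omega>" "\<lambda>j. X j \<omega>" d by (rule seqs_at[OF \<omega> d0])
    define G where "G k = (if ereal t < Tk k \<omega> \<and> Tk k \<omega> \<le> ereal u then ennreal (exp (d * X k \<omega>) - 1) * QS m (real_of_ereal (Tk k \<omega>)) \<omega> else 0)" for k
    have "QP (Suc m) u \<omega> \<le> 1 + (\<Sum>k<Suc m. G k)"
      using Qp_sum_le[where m=m and u=u] unfolding QP_def G_def QS_def .
    hence "indicator A \<omega> * QP (Suc m) u \<omega> \<le> indicator A \<omega> * (1 + (\<Sum>k<Suc m. G k))"
      by (rule mult_left_mono) simp
    also have "\<dots> = indicator A \<omega> + (\<Sum>k<Suc m. indicator A \<omega> * G k)"
      by (simp add: distrib_left sum_distrib_left)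
    also have "(\<Sum>k<Suc m. indicator A \<omega> * G k) = (\<Sum>k<Suc m. (if Tk k \<omega> < \<infinity> then H ((\<omega>, real_of_ereal (Tk k \<omega>)), X k \<omega>) else 0))"
    proof (rule sum.cong[OF refl])
      fix k
      show "indicator A \<omega> * G k = (if Tk k \<omega> < \<infinity> then H ((\<omega>, real_of_ereal (Tk k \<omega>)), X k \<omega>) else 0)"
      proof (cases "Tk k \<omega> < \<infinity>")
        case True
        have "0 < Tk k \<omega>" by (rule Tpos)
        then obtain r where r: "Tk k \<omega> = ereal r" using True by (cases "Tk k \<omega>") auto
        show ?thesis
        proof (cases "\<omega> \<in> A")
          case True
          thus ?thesis unfolding G_def H_def Phi_def using r by (simp add: mult.commute mult.left_commute)
        next
          case False
          thus ?thesis unfolding G_def H_def Phi_def using r by simp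
        qed
      next
        case False
        have "\<not> Tk k \<omega> \<le> ereal u"
        proof
          assume "Tk k \<omega> \<le> ereal u"
          hence "Tk k \<omega> < \<infinity>" using order.strict_trans1[of "Tk k \<omega>" "ereal u" \<infinity>] by simp
          thus False using False by simp
        qed
        thus ?thesis using False unfolding G_def by simp
      qed
    qed
    also have "\<dots> \<le> Sg \<omega>" unfolding Sg_def
      by (rule sum_le_suminf) auto
    finally show ?thesis by simp
  qed
  have s2: "(\<integral>\<^sup>+\<omega>. indicator A \<omega> * QP (Suc m) u \<omega> \<partial>M) \<le> emeasure M A + (\<integral>\<^sup>+\<omega>. Sg \<omega> \<partial>M)"
  proof -
    have "(\<integral>\<^sup>+\<omega>. indicator A \<omega> * QP (Suc m) u \<omega> \<partial>M) \<le> (\<integral>\<^sup>+\<omega>. indicator A \<omega> + Sg \<omega> \<partial>M)"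
      by (rule nn_integral_mono) (rule s1)
    also have "\<dots> = emeasure M A + (\<integral>\<^sup>+\<omega>. Sg \<omega> \<partial>M)"
      by (subst nn_integral_add) auto
    finally show ?thesis .
  qed
  have s3: "(\<integral>\<^sup>+\<omega>. Sg \<omega> \<partial>M) = (\<integral>\<^sup>+\<omega>. (\<integral>\<^sup>+s\<in>{0..}. ennreal (lam \<omega> s) *
              (\<integral>\<^sup>+x. H ((\<omega>, s), x) \<partial>nu (lam \<omega> s)) \<partial>lborel) \<partial>M)"
    using comp H_meas unfolding has_compensator_def Sg_def by blast
  have s4: "(\<integral>\<^sup>+s\<in>{0..}. ennreal (lam \<omega> s) * (\<integral>\<^sup>+x. H ((\<omega>, s), x) \<partial>nu (lam \<omega> s)) \<partial>lborel)
      \<le> (\<integral>\<^sup>+s. ennreal c * Phi \<omega> s \<partial>lborel)" if \<omega>: "\<omega> \<in> space M" for \<omega>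
  proof (rule nn_integral_mono)
    fix s :: real
    let ?l = "lam \<omega> s"
    have "(\<integral>\<^sup>+x. H ((\<omega>, s), x) \<partial>nu ?l) = Phi \<omega> s * (\<integral>\<^sup>+x. ennreal (exp (d * x) - 1) \<partial>nu ?l)"
      unfolding H_def by (simp, rule nn_integral_cmult, rule nu_meas, simp)
    moreover have "ennreal ?l * (Phi \<omega> s * (\<integral>\<^sup>+x. ennreal (exp (d * x) - 1) \<partial>nu ?l)) \<le> ennreal c * Phi \<omega> s"
    proof (cases "Phi \<omega> s = 0")
      case False
      hence "s \<in> {t<..u}" unfolding Phi_def by (auto simp: indicator_def split: if_splits)
      hence "?l \<in> {lmin..lmax}" using lam_bdd \<omega> Suc.prems by auto
      from nu_bound[OF this]
      have "ennreal ?l * (\<integral>\<^sup>+x. ennreal (exp (d * x) - 1) \<partial>nu ?l) * Phi \<omega> s \<le> ennreal c * Phi \<omega> s"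
        by (rule mult_right_mono) simp
      thus ?thesis by (simp add: mult.commute mult.left_commute)
    qed simp
    ultimately have h: "ennreal ?l * (\<integral>\<^sup>+x. H ((\<omega>, s), x) \<partial>nu ?l) \<le> ennreal c * Phi \<omega> s"
      by simp
    have "ennreal ?l * (\<integral>\<^sup>+x. H ((\<omega>, s), x) \<partial>nu ?l) * indicator {0..} s \<le> ennreal ?l * (\<integral>\<^sup>+x. H ((\<omega>, s), x) \<partial>nu ?l)"
      by (cases "0 \<le> s") auto
    thus "ennreal ?l * (\<integral>\<^sup>+x. H ((\<omega>, s), x) \<partial>nu ?l) * indicator {0..} s \<le> ennreal c * Phi \<omega> s"
      using h by (rule order_trans)
  qed
  interpret pair_sigma_finite M lborel
    unfolding pair_sigma_finite_def using prob prob_space_imp_sigma_finite lborel.sigma_finite_measure_axioms by auto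
  have s5: "(\<integral>\<^sup>+\<omega>. (\<integral>\<^sup>+s. ennreal c * Phi \<omega> s \<partial>lborel) \<partial>M) = (\<integral>\<^sup>+s. (\<integral>\<^sup>+\<omega>. ennreal c * Phi \<omega> s \<partial>M) \<partial>lborel)"
    by (rule Fubini'[symmetric]) (use Phi_M2 in simp)
  have s6: "(\<integral>\<^sup>+\<omega>. ennreal c * Phi \<omega> s \<partial>M) \<le> emeasure M A * (ennreal (c * exp (c * (s - t))) * indicator {t..u} s)" for s
  proof (cases "s \<in> {t<..u}")
    case True
    have "(\<integral>\<^sup>+\<omega>. ennreal c * Phi \<omega> s \<partial>M) = ennreal c * (\<integral>\<^sup>+\<omega>. indicator A \<omega> * QS m s \<omega> \<partial>M)"
      unfolding Phi_def using True by (subst nn_integral_cmult[symmetric]) (auto simp: mult.assoc)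
    also have "\<dots> \<le> ennreal c * (\<integral>\<^sup>+\<omega>. indicator A \<omega> * QP m s \<omega> \<partial>M)"
    proof (rule mult_left_mono, rule nn_integral_mono)
      fix \<omega> assume "\<omega> \<in> space M"
      hence "QS m s \<omega> \<le> QP m s \<omega>" unfolding QS_def QP_def using seqs.Qs_le_Qp[OF seqs_at[OF _ d0]] by blast
      thus "indicator A \<omega> * QS m s \<omega> \<le> indicator A \<omega> * QP m s \<omega>" by (rule mult_left_mono) simp
    qed simp
    also have "\<dots> \<le> ennreal c * (emeasure M A * ennreal (exp (c * (s - t))))"
      using Suc.IH[of s] True Suc.prems by (intro mult_left_mono) auto
    also have "\<dots> = emeasure M A * (ennreal (c * exp (c * (s - t))) * indicator {t..u} s)"
      using True c0 by (simp add: ennreal_mult mult.commute mult.left_commute)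
    finally show ?thesis .
  next
    case False
    thus ?thesis unfolding Phi_def by simp
  qed
  have "(\<integral>\<^sup>+\<omega>. indicator A \<omega> * QP (Suc m) u \<omega> \<partial>M)
     \<le> emeasure M A + (\<integral>\<^sup>+\<omega>. (\<integral>\<^sup>+s. ennreal c * Phi \<omega> s \<partial>lborel) \<partial>M)"
  proof -
    have "(\<integral>\<^sup>+\<omega>. Sg \<omega> \<partial>M) \<le> (\<integral>\<^sup>+\<omega>. (\<integral>\<^sup>+s. ennreal c * Phi \<omega> s \<partial>lborel) \<partial>M)"
      unfolding s3 by (rule nn_integral_mono) (rule s4)
    thus ?thesis using s2 by (meson add_left_mono order_trans)
  qed
  also have "\<dots> \<le> emeasure M A + (\<integral>\<^sup>+s. emeasure M A * (ennreal (c * exp (c * (s - t))) * indicator {t..u} s) \<partial>lborel)"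
    unfolding s5 by (intro add_left_mono nn_integral_mono s6)
  also have "\<dots> = emeasure M A + emeasure M A * ennreal (exp (c * (u - t)) - 1)"
    by (subst nn_integral_cmult) (auto simp: FTC[OF Suc.prems(1)])
  also have "\<dots> = emeasure M A * ennreal (exp (c * (u - t)))"
  proof -
    have "1 \<le> exp (c * (u - t))" using c0 Suc.prems by simp
    hence "ennreal (exp (c * (u - t))) = 1 + ennreal (exp (c * (u - t)) - 1)"
      by (subst ennreal_1[symmetric], subst ennreal_plus[symmetric]) auto
    thus ?thesis by (simp add: distrib_left)
  qed
  finally show ?case .
qed

end

lemma cond_bound:
  fixes f :: "'a \<Rightarrow> complex" and K :: real
  assumes sub: "sigma_finite_subalgebra M N" and fm: "finite_measure M"
    and fint: "integrable M f"
    and bnd: "\<And>B. B \<in> sets N \<Longrightarrow> (\<integral>\<^sup>+\<omega>. indicator B \<omega> * ennreal (cmod (f \<omega>)) \<partial>M) \<le> emeasure M B * ennreal K"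
    and K0: "0 \<le> K"
  shows "AE \<omega> in M. cmod (cond_exp_complex M N f \<omega>) \<le> K"
proof -
  interpret sigma_finite_subalgebra M N by (rule sub)
  interpret fin: finite_measure M by (rule fm)
  have sNM: "sets N \<subseteq> sets M" and spN: "space N = space M" using subalg by (auto simp: subalgebra_def)
  have fM[measurable]: "f \<in> borel_measurable M" using fint by auto
  define a where "a = real_cond_exp M N (\<lambda>x. Re (f x))"
  define b where "b = real_cond_exp M N (\<lambda>x. Im (f x))"
  have [measurable]: "a \<in> borel_measurable N" "b \<in> borel_measurable N" unfolding a_def b_def by auto
  define \<rho> where "\<rho> x = sqrt ((a x)\<^sup>2 + (b x)\<^sup>2)" for x
  define u1 where "u1 x = (if \<rho> x = 0 then 0 else a x / \<rho> x)" for x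
  define u2 where "u2 x = (if \<rho> x = 0 then 0 else b x / \<rho> x)" for x
  have [measurable]: "u1 \<in> borel_measurable N" "u2 \<in> borel_measurable N"
    unfolding u1_def[abs_def] u2_def[abs_def] \<rho>_def[abs_def] by measurable
  have u1M[measurable]: "u1 \<in> borel_measurable M" "u2 \<in> borel_measurable M"
    by (rule measurable_from_subalg[OF subalg], measurable)+
  have ub: "\<bar>u1 x\<bar> \<le> 1" "\<bar>u2 x\<bar> \<le> 1" for x
  proof -
    have "\<bar>a x\<bar> \<le> \<rho> x" "\<bar>b x\<bar> \<le> \<rho> x" unfolding \<rho>_def
      by (auto intro: real_sqrt_sum_squares_ge1 real_sqrt_sum_squares_ge2 simp: real_sqrt_abs[symmetric] simp del: real_sqrt_abs)
    thus "\<bar>u1 x\<bar> \<le> 1" "\<bar>u2 x\<bar> \<le> 1" unfolding u1_def u2_def by (auto simp: abs_div)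
  qed
  have uu: "u1 x * a x + u2 x * b x = \<rho> x" for x
  proof (cases "\<rho> x = 0")
    case False
    have "u1 x * a x + u2 x * b x = ((a x)\<^sup>2 + (b x)\<^sup>2) / \<rho> x"
      using False unfolding u1_def u2_def by (simp add: power2_eq_square add_divide_distrib)
    also have "(a x)\<^sup>2 + (b x)\<^sup>2 = (\<rho> x)\<^sup>2" unfolding \<rho>_def by simp
    finally show ?thesis using False by (simp add: power2_eq_square)
  qed (simp add: u1_def u2_def)
  have cs: "u1 x * Re (f x) + u2 x * Im (f x) \<le> cmod (f x)" for x
  proof -
    have "u1 x * Re (f x) + u2 x * Im (f x) = Re (cnj (Complex (u1 x) (u2 x)) * f x)" by simp
    also have "\<dots> \<le> cmod (cnj (Complex (u1 x) (u2 x)) * f x)" by (rule complex_Re_le_cmod)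
    also have "\<dots> = cmod (Complex (u1 x) (u2 x)) * cmod (f x)" by (simp add: norm_mult)
    also have "cmod (Complex (u1 x) (u2 x)) \<le> 1"
    proof (cases "\<rho> x = 0")
      case False
      hence "(u1 x)\<^sup>2 + (u2 x)\<^sup>2 = ((a x)\<^sup>2 + (b x)\<^sup>2) / (\<rho> x)\<^sup>2" unfolding u1_def u2_def
        by (simp add: power_divide add_divide_distrib)
      also have "\<dots> = 1" using False unfolding \<rho>_def by simp
      finally show ?thesis by (simp add: norm_complex_def)
    qed (simp add: u1_def u2_def norm_complex_def)
    hence "cmod (Complex (u1 x) (u2 x)) * cmod (f x) \<le> 1 * cmod (f x)"
      by (rule mult_right_mono) simp
    finally show ?thesis by simp
  qed
  define g where "g x = u1 x * Re (f x) + u2 x * Im (f x)" for x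
  have i1: "integrable M (\<lambda>x. u1 x * Re (f x))"
    by (rule Bochner_Integration.integrable_bound[of M "\<lambda>x. Re (f x)"]) (use fint ub in \<open>auto simp: abs_mult intro!: AE_I2 mult_left_le_one_le\<close>)
  have i2: "integrable M (\<lambda>x. u2 x * Im (f x))"
    by (rule Bochner_Integration.integrable_bound[of M "\<lambda>x. Im (f x)"]) (use fint ub in \<open>auto simp: abs_mult intro!: AE_I2 mult_left_le_one_le\<close>)
  have gint: "integrable M g" unfolding g_def using i1 i2 by simp
  have gM[measurable]: "g \<in> borel_measurable M" unfolding g_def[abs_def] by measurable
  have ae1: "AE x in M. real_cond_exp M N g x = \<rho> x"
  proof -
    have A1: "AE x in M. real_cond_exp M N g x = real_cond_exp M N (\<lambda>x. u1 x * Re (f x)) x + real_cond_exp M N (\<lambda>x. u2 x * Im (f x)) x"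
      unfolding g_def by (rule real_cond_exp_add[OF i1 i2])
    have A2: "AE x in M. real_cond_exp M N (\<lambda>x. u1 x * Re (f x)) x = u1 x * a x"
      unfolding a_def by (rule real_cond_exp_mult) (auto simp: i1)
    have A3: "AE x in M. real_cond_exp M N (\<lambda>x. u2 x * Im (f x)) x = u2 x * b x"
      unfolding b_def by (rule real_cond_exp_mult) (auto simp: i2)
    from A1 A2 A3 show ?thesis by eventually_elim (simp add: uu)
  qed
  define h where "h = real_cond_exp M N g"
  have [measurable]: "h \<in> borel_measurable N" unfolding h_def by simp
  define B where "B = {x\<in>space M. K < h x}"
  have BN: "B \<in> sets N" unfolding B_def using spN[symmetric] by (simp only:) measurable
  hence BM[measurable]: "B \<in> sets M" using sNM by auto
  have hM[measurable]: "h \<in> borel_measurable M" unfolding h_def by simp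
  have hint: "integrable M h" unfolding h_def using gint by auto
  have iBg: "integrable M (\<lambda>x. indicator B x * g x)"
    using integrable_real_mult_indicator[OF BM gint] by (simp add: mult.commute)
  have I1: "(\<integral>x. indicator B x * h x \<partial>M) = (\<integral>x. indicator B x * g x \<partial>M)"
    unfolding h_def
    by (rule real_cond_exp_intg(2)) (auto intro: iBg borel_measurable_indicator[OF BN])
  have cint: "integrable M (\<lambda>x. cmod (f x))" using fint by auto
  have iBc: "integrable M (\<lambda>x. indicator B x * cmod (f x))"
    using integrable_real_mult_indicator[OF BM cint] by (simp add: mult.commute)
  have I2: "(\<integral>x. indicator B x * g x \<partial>M) \<le> (\<integral>x. indicator B x * cmod (f x) \<partial>M)"
    by (rule integral_mono[OF iBg iBc]) (auto simp: indicator_def g_def cs)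
  have I3: "(\<integral>x. indicator B x * cmod (f x) \<partial>M) \<le> K * measure M B"
  proof -
    have iB: "integrable M (\<lambda>x. indicator B x * cmod (f x))"
      using integrable_real_mult_indicator[OF BM cint] by (simp add: mult.commute)
    have "ennreal (\<integral>x. indicator B x * cmod (f x) \<partial>M) = (\<integral>\<^sup>+x. ennreal (indicator B x * cmod (f x)) \<partial>M)"
      by (rule nn_integral_eq_integral[OF iB, symmetric]) auto
    also have "\<dots> = (\<integral>\<^sup>+x. indicator B x * ennreal (cmod (f x)) \<partial>M)"
      by (intro nn_integral_cong) (auto simp: indicator_def)
    also have "\<dots> \<le> emeasure M B * ennreal K" by (rule bnd[OF BN])
    also have "\<dots> = ennreal (K * measure M B)"
      using K0 by (simp add: fin.emeasure_eq_measure ennreal_mult mult.commute)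
    finally show ?thesis using K0 by (subst (asm) ennreal_le_iff) auto
  qed
  have Z: "(\<integral>x. indicator B x * (h x - K) \<partial>M) = 0"
  proof (rule antisym)
    have iBh: "integrable M (\<lambda>x. indicator B x * h x)"
      using integrable_real_mult_indicator[OF BM hint] by (simp add: mult.commute)
    have iBK: "integrable M (\<lambda>x. indicator B x * K)"
      using integrable_real_mult_indicator[OF BM, of "\<lambda>_. K"] by (simp add: mult.commute)
    have "(\<integral>x. indicator B x * (h x - K) \<partial>M) = (\<integral>x. indicator B x * h x - indicator B x * K \<partial>M)"
      by (simp add: right_diff_distrib)
    also have "\<dots> = (\<integral>x. indicator B x * h x \<partial>M) - (\<integral>x. indicator B x * K \<partial>M)"
      using iBh iBK by (rule Bochner_Integration.integral_diff)
    also have "(\<integral>x. indicator B x * K \<partial>M) = K * measure M B"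
      using BM by (simp add: mult.commute)
    finally show "(\<integral>x. indicator B x * (h x - K) \<partial>M) \<le> 0" using I1 I2 I3 by simp
    show "0 \<le> (\<integral>x. indicator B x * (h x - K) \<partial>M)"
      by (rule integral_nonneg_AE) (auto simp: B_def indicator_def)
  qed
  have "AE x in M. indicator B x * (h x - K) = 0"
  proof (subst integral_nonneg_eq_0_iff_AE[symmetric])
    show "integrable M (\<lambda>x. indicator B x * (h x - K))"
      using integrable_real_mult_indicator[OF BM, of "\<lambda>x. h x - K"] hint by (simp add: mult.commute)
    show "AE x in M. 0 \<le> indicator B x * (h x - K)" by (auto simp: B_def indicator_def)
  qed (rule Z)
  with AE_space have "AE x in M. h x \<le> K"
    by eventually_elim (auto simp: B_def indicator_def split: if_splits)
  with ae1 show ?thesis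
    unfolding h_def
  proof eventually_elim
    case (elim x)
    have "cmod (cond_exp_complex M N f x) = \<rho> x"
      unfolding cond_exp_complex_def a_def[symmetric] b_def[symmetric] \<rho>_def by (simp add: norm_complex_def)
    thus ?case using elim by simp
  qed
qed

lemma (in seqs) Qp_Suc_mono: "Qp T Y d t m s \<le> Qp T Y d t (Suc m) s"
proof -
  have f: "1 \<le> (if ereal t < T m \<and> T m \<le> ereal s then ennreal (exp (d * Y m)) else 1)"
  proof (cases "ereal t < T m \<and> T m \<le> ereal s")
    case True
    hence "T m < \<infinity>" using order.strict_trans1[of "T m" "ereal s" \<infinity>] by simp
    thus ?thesis using True fac_ge1' by simp
  qed auto
  have "Qp T Y d t m s = Qp T Y d t m s * 1" by simp
  also have "\<dots> \<le> Qp T Y d t m s * (if ereal t < T m \<and> T m \<le> ereal s then ennreal (exp (d * Y m)) else 1)"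
    by (rule mult_left_mono[OF f]) simp
  also have "\<dots> = Qp T Y d t (Suc m) s" unfolding Qp_def by simp
  finally show ?thesis .
qed

context ctx2 begin

definition "Wset \<omega> = {k. ereal t < Tk k \<omega> \<and> Tk k \<omega> \<le> ereal Tend}"
definition "S \<omega> = (\<Sum>k\<in>Wset \<omega>. X k \<omega>)"

lemma S_meas[measurable]: "S \<in> borel_measurable M"
proof -
  define fN where "fN N \<omega> = (if finite (Wset \<omega>) then (\<Sum>k<N. if k \<in> Wset \<omega> then X k \<omega> else 0) else 0)" for N \<omega>
  have fin_eq: "finite (Wset \<omega>) \<longleftrightarrow> (\<exists>N. \<forall>k. N \<le> k \<longrightarrow> \<not> (ereal t < Tk k \<omega> \<and> Tk k \<omega> \<le> ereal Tend))" for \<omega>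
  proof
    assume "finite (Wset \<omega>)"
    then obtain N where "\<forall>n\<in>Wset \<omega>. n < N" using finite_nat_set_iff_bounded by blast
    thus "\<exists>N. \<forall>k. N \<le> k \<longrightarrow> \<not> (ereal t < Tk k \<omega> \<and> Tk k \<omega> \<le> ereal Tend)"
      unfolding Wset_def using leD by blast
  next
    assume "\<exists>N. \<forall>k. N \<le> k \<longrightarrow> \<not> (ereal t < Tk k \<omega> \<and> Tk k \<omega> \<le> ereal Tend)"
    then obtain N where "\<forall>k. N \<le> k \<longrightarrow> \<not> (ereal t < Tk k \<omega> \<and> Tk k \<omega> \<le> ereal Tend)" by blast
    hence "Wset \<omega> \<subseteq> {..<N}" unfolding Wset_def by (auto simp: not_less[symmetric])
    thus "finite (Wset \<omega>)" by (rule finite_subset) simp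
  qed
  have [measurable]: "fN N \<in> borel_measurable M" for N
    unfolding fN_def[abs_def] fin_eq Wset_def by measurable
  show ?thesis
  proof (rule borel_measurable_LIMSEQ_metric[of fN])
    fix \<omega> assume "\<omega> \<in> space M"
    show "(\<lambda>N. fN N \<omega>) \<longlonglongrightarrow> S \<omega>"
    proof (cases "finite (Wset \<omega>)")
      case True
      then obtain N0 where N0: "Wset \<omega> \<subseteq> {..<N0}" using finite_nat_iff_bounded by blast
      have "fN N \<omega> = S \<omega>" if "N0 \<le> N" for N
      proof -
        have "fN N \<omega> = (\<Sum>k\<in>{..<N} \<inter> Wset \<omega>. X k \<omega>)"
          using True unfolding fN_def by (simp add: sum.inter_restrict)
        also have "{..<N} \<inter> Wset \<omega> = Wset \<omega>" using N0 that by auto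
        finally show ?thesis unfolding S_def .
      qed
      thus ?thesis by (intro tendsto_eventually) (auto simp: eventually_sequentially)
    next
      case False
      thus ?thesis unfolding fN_def S_def by simp
    qed
  qed simp
qed

lemma exp_bound:
  assumes A: "A \<in> sets (F t)"
  shows "(\<integral>\<^sup>+\<omega>. indicator A \<omega> * ennreal (exp (d * S \<omega>)) \<partial>M) \<le> emeasure M A * ennreal (exp (c * (Tend - t)))"
proof -
  have AM[measurable]: "A \<in> sets M" using A F_sets by auto
  have pt: "ennreal (exp (d * S \<omega>)) \<le> (SUP m. QP m Tend \<omega>)" if \<omega>: "\<omega> \<in> space M" for \<omega>
  proof -
    interpret seqs "\<lambda>j. Tk j \<omega>" "\<lambda>j. X j \<omega>" d by (rule seqs_at[OF \<omega> d0])
    show ?thesis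
    proof (cases "finite (Wset \<omega>)")
      case True
      thus ?thesis using Qp_exp[where u=Tend] unfolding S_def Wset_def QP_def by simp
    next
      case False
      hence "ennreal (exp (d * S \<omega>)) = QP 0 Tend \<omega>" unfolding S_def QP_def Qp_def by simp
      thus ?thesis by (metis SUP_upper UNIV_I)
    qed
  qed
  have "(\<integral>\<^sup>+\<omega>. indicator A \<omega> * ennreal (exp (d * S \<omega>)) \<partial>M) \<le> (\<integral>\<^sup>+\<omega>. (SUP m. indicator A \<omega> * QP m Tend \<omega>) \<partial>M)"
    by (rule nn_integral_mono) (auto simp: SUP_mult_left_ennreal[symmetric] intro!: mult_left_mono pt)
  also have "\<dots> = (SUP m. (\<integral>\<^sup>+\<omega>. indicator A \<omega> * QP m Tend \<omega> \<partial>M))"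
  proof (rule nn_integral_monotone_convergence_SUP_AE)
    fix m
    show "AE \<omega> in M. indicator A \<omega> * QP m Tend \<omega> \<le> indicator A \<omega> * QP (Suc m) Tend \<omega>"
    proof (rule AE_I2)
      fix \<omega> assume \<omega>: "\<omega> \<in> space M"
      interpret seqs "\<lambda>j. Tk j \<omega>" "\<lambda>j. X j \<omega>" d by (rule seqs_at[OF \<omega> d0])
      show "indicator A \<omega> * QP m Tend \<omega> \<le> indicator A \<omega> * QP (Suc m) Tend \<omega>"
        unfolding QP_def by (rule mult_left_mono[OF Qp_Suc_mono]) simp
    qed
  qed simp
  also have "\<dots> \<le> emeasure M A * ennreal (exp (c * (Tend - t)))"
    by (rule SUP_least) (rule main_ind[OF A tT order.refl])
  finally show ?thesis .
qed

end

context ctx2 begin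

lemma bnd_gen:
  assumes A: "A \<in> sets (F t)"
  shows "(\<integral>\<^sup>+\<omega>. indicator A \<omega> * ennreal (exp (-r*(Tend-t)) * exp (d * S \<omega>)) \<partial>M)
     \<le> emeasure M A * ennreal (exp (-r*(Tend-t)) * exp (c*(Tend-t)))"
proof -
  have AM[measurable]: "A \<in> sets M" using A F_sets by auto
  have "(\<integral>\<^sup>+\<omega>. indicator A \<omega> * ennreal (exp (-r*(Tend-t)) * exp (d * S \<omega>)) \<partial>M)
      = (\<integral>\<^sup>+\<omega>. ennreal (exp (-r*(Tend-t))) * (indicator A \<omega> * ennreal (exp (d * S \<omega>))) \<partial>M)"
    by (intro nn_integral_cong) (simp add: ennreal_mult mult.left_commute)
  also have "\<dots> = ennreal (exp (-r*(Tend-t))) * (\<integral>\<^sup>+\<omega>. indicator A \<omega> * ennreal (exp (d * S \<omega>)) \<partial>M)"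
    by (rule nn_integral_cmult) measurable
  also have "\<dots> \<le> ennreal (exp (-r*(Tend-t))) * (emeasure M A * ennreal (exp (c * (Tend - t))))"
    by (rule mult_left_mono[OF exp_bound[OF A]]) simp
  also have "\<dots> = emeasure M A * ennreal (exp (-r*(Tend-t)) * exp (c*(Tend-t)))"
    by (simp add: ennreal_mult mult.commute mult.left_commute)
  finally show ?thesis .
qed

end

theorem mainTheorem6:
  fixes M :: "'a measure" and F :: "real \<Rightarrow> 'a measure"
    and Tk :: "nat \<Rightarrow> 'a \<Rightarrow> ereal" and X :: "nat \<Rightarrow> 'a \<Rightarrow> real"
    and lam :: "'a \<Rightarrow> real \<Rightarrow> real" and nu :: "real \<Rightarrow> real measure"
    and lmin lmax s0 \<delta> y r t Tend :: real
  assumes "prob_space M"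
    and "mpp_filtration M F"
    and "0 \<le> lmin" and "lmin \<le> lmax"
    and nu_kernel: "nu \<in> borel \<rightarrow>\<^sub>M subprob_algebra borel"
    and nu_prob: "\<And>l. 0 \<le> l \<Longrightarrow> prob_space (nu l)"
    and nu_supp: "\<And>l. 0 \<le> l \<Longrightarrow> emeasure (nu l) {..0} = 0"
    and "0 < s0"
    and exp_mom: "\<And>s. 0 \<le> s \<Longrightarrow> s < s0 \<Longrightarrow>
          (SUP l\<in>{lmin..lmax}. \<integral>\<^sup>+x. ennreal (exp (s * x)) \<partial>nu l) < \<infinity>"
    and "0 \<le> \<delta>" and "\<delta> < s0"
    and "0 \<le> r"
    and "0 \<le> t" and "t \<le> Tend"
    and "marked_point_process M F Tk X"
    and lam_pred: "(\<lambda>(\<omega>, s). lam \<omega> s) \<in> borel_measurable (predictable M F)"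
    and lam_nonneg: "\<And>\<omega> s. 0 \<le> lam \<omega> s"
    and "has_compensator M F Tk X lam nu"
    and lam_bdd: "\<forall>\<omega>\<in>space M. \<forall>s\<in>{t..Tend}. lam \<omega> s \<in> {lmin..lmax}"
  shows "AE \<omega> in M.
     cmod (cond_exp_complex M (vimage_algebra (space M) (\<lambda>\<omega>. lam \<omega> t) borel)
        (\<lambda>\<omega>. exp (complex_of_real (- r * (Tend - t))) *
              exp (Complex \<delta> y * complex_of_real
                (\<Sum>k\<in>{k. ereal t < Tk k \<omega> \<and> Tk k \<omega> \<le> ereal Tend}. X k \<omega>))) \<omega>)
     \<le> exp ((Tend - t) * (lmax * (enn2real (SUP l\<in>{lmin..lmax}.
              \<integral>\<^sup>+x. ennreal (exp (\<delta> * x)) \<partial>nu l) - 1) - r))"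
proof -
  interpret ctx2 M F Tk X lam nu lmin lmax \<delta> t Tend
    by (intro ctx2.intro ctx.intro ctx2_axioms.intro; (fact assms | fact exp_mom[OF assms(10,11)]))
  interpret prob_space M by (rule assms(1))
  define N where "N = vimage_algebra (space M) (\<lambda>\<omega>. lam \<omega> t) borel"
  define f where "f \<omega> = exp (complex_of_real (- r * (Tend - t))) * exp (Complex \<delta> y * complex_of_real (S \<omega>))" for \<omega>
  define K where "K = exp (-r*(Tend-t)) * exp (c*(Tend-t))"
  have NF: "sets N \<subseteq> sets (F t)"
  proof
    fix B assume "B \<in> sets N"
    then obtain C :: "real set" where C: "C \<in> sets borel" "B = (\<lambda>\<omega>. lam \<omega> t) -` C \<inter> space M"
      unfolding N_def by (subst (asm) sets_vimage_algebra2) auto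
    show "B \<in> sets (F t)" using measurable_sets[OF lam_F[OF t0] C(1)] C(2) F_space by simp
  qed
  have sub: "sigma_finite_subalgebra M N"
  proof (rule finite_measure_subalgebra_is_sigma_finite)
    show "finite_measure_subalgebra M N"
      unfolding finite_measure_subalgebra_def finite_measure_subalgebra_axioms_def subalgebra_def
      using NF F_sets finite_measure_axioms by (auto simp: N_def)
  qed
  have cmodf: "cmod (f \<omega>) = exp (-r*(Tend-t)) * exp (\<delta> * S \<omega>)" for \<omega>
    unfolding f_def by (simp add: norm_mult)
  have fM[measurable]: "f \<in> borel_measurable M" unfolding f_def[abs_def] by measurable
  have spF: "space M \<in> sets (F t)" using sets.top[of "F t"] F_space by simp
  have bnd: "(\<integral>\<^sup>+\<omega>. indicator B \<omega> * ennreal (cmod (f \<omega>)) \<partial>M) \<le> emeasure M B * ennreal K"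
    if "B \<in> sets (F t)" for B
    unfolding cmodf K_def using bnd_gen[OF that] by (simp add: mult.assoc)
  have fint: "integrable M f"
  proof (subst integrable_iff_bounded, intro conjI fM)
    have "(\<integral>\<^sup>+\<omega>. ennreal (norm (f \<omega>)) \<partial>M) = (\<integral>\<^sup>+\<omega>. indicator (space M) \<omega> * ennreal (cmod (f \<omega>)) \<partial>M)"
      by (intro nn_integral_cong) simp
    also have "\<dots> \<le> emeasure M (space M) * ennreal K" by (rule bnd[OF spF])
    also have "\<dots> < \<infinity>" by (simp add: emeasure_space_1)
    finally show "(\<integral>\<^sup>+\<omega>. ennreal (norm (f \<omega>)) \<partial>M) < \<infinity>" .
  qed
  have bnd': "(\<integral>\<^sup>+\<omega>. indicator B \<omega> * ennreal (cmod (f \<omega>)) \<partial>M) \<le> emeasure M B * ennreal K"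
    if "B \<in> sets N" for B
    using bnd[of B] NF that by blast
  have K0: "0 \<le> K" unfolding K_def by simp
  have main: "AE \<omega> in M. cmod (cond_exp_complex M N f \<omega>) \<le> K"
    by (rule cond_bound[OF sub finite_measure_axioms fint bnd' K0])
  have feq: "(\<lambda>\<omega>. exp (complex_of_real (- r * (Tend - t))) *
              exp (Complex \<delta> y * complex_of_real
                (\<Sum>k\<in>{k. ereal t < Tk k \<omega> \<and> Tk k \<omega> \<le> ereal Tend}. X k \<omega>))) = f"
    unfolding f_def S_def Wset_def ..
  have Keq: "exp ((Tend - t) * (lmax * (enn2real (SUP l\<in>{lmin..lmax}.
              \<integral>\<^sup>+x. ennreal (exp (\<delta> * x)) \<partial>nu l) - 1) - r)) = K"
    unfolding K_def c_def ms_def Mst_def by (simp add: exp_add[symmetric] algebra_simps)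
  show ?thesis unfolding feq Keq N_def[symmetric] by (rule main)
qed

end
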